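(* Let $0<\sigma<\infty$ and $\psi\in L^1(\mathbb{R})\cap L^\infty(\mathbb{R})$. Then the functional $\Psi(g)=\int_{-\infty}^{\infty}g(t)\overline{\psi(t)}\,dt$, $g\in B^1_\sigma$, is weak$^*$ continuous on $B^1_\sigma$.
   Context: For $0<\sigma<\infty$, $B^1_\sigma$ is the space of $f\in L^1(\mathbb{R})$ whose Fourier transform is supported in $[-\sigma,\sigma]$, with the $L^1(\mathbb{R})$ norm. $C_0(\mathbb{R})$ is the Banach space of continuous complex functions on $\mathbb{R}$ vanishing at infinity. Let $\mathfrak{I}_\sigma$ be the set of finite complex Borel measures $\mu$ on $\mathbb{R}$ whose Fourier–Stieltjes transform vanishes for $|t|\ge\sigma$, and $C_{0,\sigma}(\mathbb{R})=\{u\in C_0(\mathbb{R}): \int u\,d\mu=0 \text{ for all }\mu\in\mathfrak{I}_\sigma\}$. Then $B^1_\sigma$ is the dual of $C_0(\mathbb{R})/C_{0,\sigma}(\mathbb{R})$ via the pairing $\langle f,[u]\rangle=\int_{\mathbb{R}}f(x)u(x)\,dx$, and the weak$^*$ topology on $B^1_\sigma$ refers to this duality. *)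

theory Defs
  imports "HOL-Analysis.Analysis"
begin

definition fourier_transform :: "(real \<Rightarrow> complex) \<Rightarrow> real \<Rightarrow> complex" where
  "fourier_transform f t = (LINT x|lborel. f x * exp (- (\<i> * complex_of_real (t * x))))"

definition B1 :: "real \<Rightarrow> (real \<Rightarrow> complex) set" where
  "B1 \<sigma> = {f. integrable lborel f \<and>
               closure {t. fourier_transform f t \<noteq> 0} \<subseteq> {-\<sigma>..\<sigma>}}"

definition C0 :: "(real \<Rightarrow> complex) set" where
  "C0 = {u. continuous_on UNIV u \<and> (u \<longlongrightarrow> 0) at_infinity}"

text \<open>The duality pairing between B^1_sigma and C_0(R)/C_{0,sigma}(R):
  the class [u] acts on f by integral of f u.\<close>
definition pairing :: "(real \<Rightarrow> complex) \<Rightarrow> (real \<Rightarrow> complex) \<Rightarrow> complex" where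
  "pairing f u = (LINT x|lborel. f x * u x)"

definition weak_star_B1 :: "real \<Rightarrow> (real \<Rightarrow> complex) topology" where
  "weak_star_B1 \<sigma> = topology_generated_by
     (insert (B1 \<sigma>) {{f \<in> B1 \<sigma>. pairing f u \<in> U} | u U. u \<in> C0 \<and> open U})"

end

theory Submission
  imports Defs "HOL-Probability.Probability"
begin

definition P :: "real \<Rightarrow> real \<Rightarrow> real" where
  "P b x = b\<^sup>2 * (sinc (b * x / 2))\<^sup>2 / 2"

lemma P_cont: "isCont (P b) x"
  unfolding P_def by (intro continuous_intros isCont_o2[OF _ isCont_sinc]) auto

lemma P_nonneg: "0 \<le> P b x" unfolding P_def by simp

lemma P_alt: "x \<noteq> 0 \<Longrightarrow> P b x = (1 - cos (b * x)) / x\<^sup>2"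
proof (cases "b = 0")
  case False
  assume x: "x \<noteq> 0"
  have c: "cos (b * x) = 1 - 2 * (sin (b * x / 2))\<^sup>2"
    using cos_double_sin[of "b*x/2"] by simp
  show ?thesis using False x unfolding P_def c
    by (simp add: field_simps power2_eq_square)
qed (simp add: P_def)

lemma P_deriv:
  assumes "y \<noteq> 0"
  shows "((\<lambda>y. Si y - (1 - cos y) / y) has_real_derivative P 1 y) (at y)"
proof -
  have "((\<lambda>y. Si y - (1 - cos y) / y) has_real_derivative
     (sin y / y - ((sin y) * y - (1 - cos y) * 1) / (y * y))) (at y)"
    using assms DERIV_Si[of y]
    by (auto intro!: derivative_eq_intros)
  moreover have "sin y / y - ((sin y) * y - (1 - cos y) * 1) / (y * y) = P 1 y"
    using assms by (simp add: P_alt field_simps power2_eq_square)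
  ultimately show ?thesis by simp
qed

lemma cosdiv_eq: "(\<lambda>y::real. (1 - cos y) / y) = (\<lambda>y. y * P 1 y)"
proof
  fix y :: real show "(1 - cos y) / y = y * P 1 y"
    by (cases "y = 0") (simp_all add: P_alt power2_eq_square)
qed

lemma cosdiv_inf: "((\<lambda>y::real. (1 - cos y) / y) \<longlongrightarrow> 0) at_infinity"
proof -
  have ev: "\<forall>\<^sub>F y in at_infinity. norm ((1 - cos y) / y) \<le> 2 * inverse (norm (y::real))"
  proof (rule always_eventually, rule allI)
    fix y :: real
    have "\<bar>1 - cos y\<bar> \<le> 2" using cos_ge_minus_one[of y] cos_le_one[of y] by linarith
    then show "norm ((1 - cos y) / y) \<le> 2 * inverse (norm y)"
      by (simp add: abs_divide divide_right_mono field_simps) 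
  qed
  have lim: "((\<lambda>y::real. 2 * inverse (norm y)) \<longlongrightarrow> 0) at_infinity"
    using tendsto_mult[OF tendsto_const[of 2] tendsto_inverse_0_at_top[OF filterlim_norm_at_top[where 'a=real]]]
    by simp
  show ?thesis by (rule Lim_null_comparison[OF ev lim])
qed

lemma Si_at_bot: "(Si \<longlongrightarrow> - (pi/2)) at_bot"
proof -
  have "((\<lambda>x. - Si x) \<longlongrightarrow> - (pi/2)) at_top"
    by (intro tendsto_minus Si_at_top)
  then have "((\<lambda>x. Si (- x)) \<longlongrightarrow> - (pi/2)) at_top"
    by (rule Lim_transform_eventually) (auto simp: eventually_at_top_linorder Si_neg intro!: exI[of _ 0])
  then show ?thesis by (simp add: filterlim_at_bot_mirror)
qed

lemma Si_0[simp]: "Si 0 = 0" by (simp add: Si_def interval_lebesgue_integral_def einterval_same zero_ereal_def[symmetric] set_lebesgue_integral_def)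

lemma F_cont: "isCont (\<lambda>y. Si y - (1 - cos y) / y) x"
proof -
  have "isCont (\<lambda>y. Si y - y * P 1 y) x" by (intro continuous_intros isCont_Si P_cont)
  moreover have "(\<lambda>y. Si y - (1 - cos y) / y) = (\<lambda>y. Si y - y * P 1 y)"
    using cosdiv_eq by (metis)
  ultimately show ?thesis by simp
qed

lemma P1_pos:
  "set_integrable lborel (einterval 0 \<infinity>) (P 1)" "(LBINT x=0..\<infinity>. P 1 x) = pi/2"
proof -
  have d: "\<And>x. 0 < ereal x \<Longrightarrow> ereal x < \<infinity> \<Longrightarrow> DERIV (\<lambda>y. Si y - (1 - cos y) / y) x :> P 1 x"
    by (rule P_deriv) (auto simp: zero_ereal_def)
  have A: "(((\<lambda>y. Si y - (1 - cos y) / y) \<circ> real_of_ereal) \<longlongrightarrow> 0) (at_right 0)"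
    unfolding zero_ereal_def ereal_tendsto_simps
    using F_cont[of 0, unfolded isCont_def] by (auto intro: tendsto_mono at_le)
  have B: "(((\<lambda>y. Si y - (1 - cos y) / y) \<circ> real_of_ereal) \<longlongrightarrow> pi/2) (at_left \<infinity>)"
    unfolding ereal_tendsto_simps
    using tendsto_diff[OF Si_at_top tendsto_mono[OF at_top_le_at_infinity cosdiv_inf]] by simp
  show "set_integrable lborel (einterval 0 \<infinity>) (P 1)" "(LBINT x=0..\<infinity>. P 1 x) = pi/2"
    using interval_integral_FTC_nonneg[OF _ d _ _ A B] by (auto simp: P_cont P_nonneg)
qed

lemma P1_neg:
  "set_integrable lborel (einterval (-\<infinity>) 0) (P 1)" "(LBINT x=-\<infinity>..0. P 1 x) = pi/2"
proof -
  have d: "\<And>x. -\<infinity> < ereal x \<Longrightarrow> ereal x < 0 \<Longrightarrow> DERIV (\<lambda>y. Si y - (1 - cos y) / y) x :> P 1 x"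
    by (rule P_deriv) (auto simp: zero_ereal_def)
  have A: "(((\<lambda>y. Si y - (1 - cos y) / y) \<circ> real_of_ereal) \<longlongrightarrow> -(pi/2)) (at_right (-\<infinity>))"
    unfolding ereal_tendsto_simps
    using tendsto_diff[OF Si_at_bot tendsto_mono[OF at_bot_le_at_infinity cosdiv_inf]] by simp
  have B: "(((\<lambda>y. Si y - (1 - cos y) / y) \<circ> real_of_ereal) \<longlongrightarrow> 0) (at_left 0)"
    unfolding zero_ereal_def ereal_tendsto_simps
    using F_cont[of 0, unfolded isCont_def] by (auto intro: tendsto_mono at_le)
  show "set_integrable lborel (einterval (-\<infinity>) 0) (P 1)" "(LBINT x=-\<infinity>..0. P 1 x) = pi/2"
    using interval_integral_FTC_nonneg[OF _ d _ _ A B] by (auto simp: P_cont P_nonneg)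
qed

lemma P_meas[measurable]: "P b \<in> borel_measurable borel"
  by (intro borel_measurable_continuous_onI continuous_at_imp_continuous_on ballI P_cont)

lemma P1_int: "integrable lborel (P 1)" "(LINT x|lborel. P 1 x) = pi"
proof -
  have A: "set_integrable lborel {..<0} (P 1)" using P1_neg(1) by (simp add: zero_ereal_def)
  have B: "set_integrable lborel {0<..} (P 1)" using P1_pos(1) by (simp add: zero_ereal_def)
  have AB: "set_integrable lborel ({..<0} \<union> {0<..}) (P 1)"
    by (rule set_integrable_Un[OF A B]) auto
  have ae: "AE x in lborel. indicator ({..<0} \<union> {0<..}) x *\<^sub>R P 1 x = P 1 x"
    using AE_lborel_singleton[of "0::real"] by eventually_elim (auto simp: indicator_def)
  show "integrable lborel (P 1)"
    using AB ae unfolding set_integrable_def by (subst (asm) integrable_cong_AE) auto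
  have "(LINT x|lborel. P 1 x) = (LINT x:({..<0} \<union> {0<..})|lborel. P 1 x)"
    unfolding set_lebesgue_integral_def by (rule integral_cong_AE[OF _ _ ae[THEN AE_mp, OF AE_I2]]) auto
  also have "\<dots> = (LINT x:{..<0}|lborel. P 1 x) + (LINT x:{0<..}|lborel. P 1 x)"
    by (rule set_integral_Un[OF _ A B]) auto
  also have "\<dots> = pi/2 + pi/2"
    using P1_neg(2) P1_pos(2) by (simp add: zero_ereal_def interval_lebesgue_integral_def)
  finally show "(LINT x|lborel. P 1 x) = pi" by simp
qed

lemma P_scale: "P b x = b\<^sup>2 * P 1 (0 + b * x)"
  by (simp add: P_def)

lemma P_zero: "P 0 = (\<lambda>_. 0)" by (rule ext) (simp add: P_def)

lemma P_int: "integrable lborel (P b)" "(LINT x|lborel. P b x) = pi * \<bar>b\<bar>"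
proof -
  show "integrable lborel (P b)"
  proof (cases "b = 0")
    case True then show ?thesis unfolding True P_zero by simp
  next
    case False
    have "integrable lborel (\<lambda>x. P 1 (0 + b * x))"
      using lborel_integrable_real_affine[OF P1_int(1) False] .
    then show ?thesis unfolding P_scale[of b] by simp
  qed
  show "(LINT x|lborel. P b x) = pi * \<bar>b\<bar>"
  proof (cases "b = 0")
    case True then show ?thesis unfolding True P_zero by simp
  next
    case False
    have "pi = \<bar>b\<bar> * (LINT x|lborel. P 1 (0 + b * x))"
      using lborel_integral_real_affine[OF False, of "P 1" 0] P1_int(2) by simp
    then have "(LINT x|lborel. P 1 (0 + b * x)) = pi / \<bar>b\<bar>" using False by (simp add: field_simps)
    have "(LINT x|lborel. P b x) = b\<^sup>2 * (LINT x|lborel. P 1 (0 + b * x))"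
      unfolding P_scale[of b] by (rule integral_mult_right_zero)
    also have "\<dots> = b\<^sup>2 * (pi / \<bar>b\<bar>)" by (simp only: \<open>(LINT x|lborel. P 1 (0 + b * x)) = pi / \<bar>b\<bar>\<close>)
    also have "\<dots> = pi * \<bar>b\<bar>" using False
      by (cases "b > 0") (auto simp: field_simps power2_eq_square)
    finally show ?thesis .
  qed
qed

definition K :: "real \<Rightarrow> real \<Rightarrow> real" where
  "K s x = (P (2* s) x - P s x) / (pi * s)"

lemma K_meas[measurable]: "K s \<in> borel_measurable borel"
  unfolding K_def by measurable

lemma K_int: "integrable lborel (K s)"
  unfolding K_def using P_int(1) by (intro integrable_divide integrable_diff) auto

lemma K_cos:
  assumes "x \<noteq> 0" "s \<noteq> 0"
  shows "K s x * cos (t * x) =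
    (P (2 * s+t) x + P (2 * s-t) x - P (s+t) x - P (s-t) x) / (2 * pi * s)"
proof -
  have e: "cos ((a + b) * x) + cos ((a - b) * x) = 2 * cos (a * x) * cos (b * x)" for a b
    by (simp add: distrib_right left_diff_distrib cos_add cos_diff)
  have "(P (2 * s+t) x + P (2 * s-t) x - P (s+t) x - P (s-t) x)
      = ((cos ((s+t)*x) + cos ((s-t)*x)) - (cos ((2 * s+t)*x) + cos ((2 * s-t)*x))) / x\<^sup>2"
    using assms by (simp add: P_alt diff_divide_distrib add_divide_distrib)
  also have "\<dots> = 2 * (cos (s*x) - cos (2 * s*x)) * cos (t*x) / x\<^sup>2"
    unfolding e by (simp add: algebra_simps)
  finally have eq: "(P (2 * s+t) x + P (2 * s-t) x - P (s+t) x - P (s-t) x) = 2 * (cos (s*x) - cos (2 * s*x)) * cos (t*x) / x\<^sup>2" .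
  have Kx: "K s x = (cos (s*x) - cos (2 * s*x)) / (x\<^sup>2 * (pi * s))"
    using assms unfolding K_def by (simp add: P_alt field_simps)
  show ?thesis unfolding Kx eq using assms by (simp add: field_simps)
qed

lemma P_even: "P b (-x) = P b x" unfolding P_def by simp

lemma K_even: "K s (-x) = K s x" unfolding K_def by (simp add: P_even)

lemma K_sin_odd: "K s (-x) * sin (t * (-x)) = - (K s x * sin (t * x))"
  by (simp add: K_def P_def)

lemma K_sin_int: "integrable lborel (\<lambda>x. K s x * sin (t * x))"
  by (intro Bochner_Integration.integrable_bound[OF K_int[of s]] AE_I2) (auto simp: abs_mult intro!: mult_left_le)

lemma K_cos_int: "integrable lborel (\<lambda>x. K s x * cos (t * x))"
  by (intro Bochner_Integration.integrable_bound[OF K_int[of s]] AE_I2) (auto simp: abs_mult intro!: mult_left_le)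

lemma K_sin_zero: "(LINT x|lborel. K s x * sin (t * x)) = 0"
proof -
  have "(LINT x|lborel. K s x * sin (t * x)) = \<bar>-1\<bar> *\<^sub>R (LINT x|lborel. K s (0 + -1 * x) * sin (t * (0 + -1 * x)))"
    by (rule lborel_integral_real_affine) simp
  also have "(\<lambda>x. K s (0 + -1 * x) * sin (t * (0 + -1 * x))) = (\<lambda>x. - (K s x * sin (t * x)))"
    by (rule ext) (simp add: K_even)
  also have "\<bar>-1\<bar> *\<^sub>R (LINT x|lborel. - (K s x * sin (t * x))) = - (LINT x|lborel. K s x * sin (t * x))"
    by simp
  finally show ?thesis by simp
qed

lemma K_cos_val:
  assumes "0 < s" "\<bar>t\<bar> \<le> s"
  shows "(LINT x|lborel. K s x * cos (t * x)) = 1"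
proof -
  have ae: "AE x in lborel. K s x * cos (t * x) =
    (P (2* s+t) x + P (2* s-t) x - P (s+t) x - P (s-t) x) / (2 * pi * s)"
    using AE_lborel_singleton[of "0::real"] by eventually_elim (rule K_cos, use assms in auto)
  have "(LINT x|lborel. K s x * cos (t * x)) =
     (LINT x|lborel. (P (2* s+t) x + P (2* s-t) x - P (s+t) x - P (s-t) x) / (2 * pi * s))"
    by (rule integral_cong_AE[OF _ _ ae]) auto
  also have "\<dots> = (pi * \<bar>2* s+t\<bar> + pi * \<bar>2* s-t\<bar> - pi * \<bar>s+t\<bar> - pi * \<bar>s-t\<bar>) / (2 * pi * s)"
    using P_int by (simp add: integral_diff integral_add)
  also have "\<dots> = 1"
    using assms by (simp add: abs_if field_simps split: if_splits) 
  finally show ?thesis .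
qed

lemma K_fourier:
  assumes "0 < s" "\<bar>t\<bar> \<le> s"
  shows "fourier_transform (\<lambda>x. complex_of_real (K s x)) t = 1"
proof -
  have "(\<lambda>x. complex_of_real (K s x) * exp (- (\<i> * complex_of_real (t * x))))
      = (\<lambda>x. complex_of_real (K s x * cos (t * x)) - \<i> * complex_of_real (K s x * sin (t * x)))"
  proof
    fix x
    have "exp (- (\<i> * complex_of_real (t * x))) = cis (- (t * x))" by (simp add: cis_conv_exp)
    also have "\<dots> = complex_of_real (cos (t*x)) - \<i> * complex_of_real (sin (t*x))"
      by (simp add: complex_eq_iff)
    finally have "exp (- (\<i> * complex_of_real (t * x))) = complex_of_real (cos (t*x)) - \<i> * complex_of_real (sin (t*x))" .
    then show "complex_of_real (K s x) * exp (- (\<i> * complex_of_real (t * x))) =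
         complex_of_real (K s x * cos (t * x)) - \<i> * complex_of_real (K s x * sin (t * x))"
      by (simp only:) (simp add: algebra_simps)
  qed
  then have "fourier_transform (\<lambda>x. complex_of_real (K s x)) t =
     (CLBINT x. complex_of_real (K s x * cos (t * x)) - \<i> * complex_of_real (K s x * sin (t * x)))"
    unfolding fourier_transform_def by (simp only:)
  also have "\<dots> = (CLBINT x. complex_of_real (K s x * cos (t * x))) - (CLBINT x. \<i> * complex_of_real (K s x * sin (t * x)))"
    by (rule Bochner_Integration.integral_diff) (auto intro!: integrable_of_real K_sin_int K_cos_int integrable_mult_right simp del: of_real_mult)
  also have "\<dots> = 1"
    using K_sin_zero[of s t] K_cos_val[OF assms] by (simp only: integral_mult_right_zero integral_complex_of_real) simp
  finally show ?thesis .
qed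


lemma iexp_meas[measurable]: "(\<lambda>x::real. iexp (t * x)) \<in> borel_measurable borel"
  by (intro borel_measurable_continuous_onI continuous_intros)

lemma dens_rd:
  fixes G :: "real \<Rightarrow> real"
  assumes G: "integrable lborel G" and nn: "\<And>x. 0 \<le> G x" and one: "(LINT x|lborel. G x) = 1"
  shows "real_distribution (density lborel (\<lambda>x. ennreal (G x)))"
    and "char (density lborel (\<lambda>x. ennreal (G x))) t = (CLBINT x. G x *\<^sub>R iexp (t * x))"
proof -
  have Gm[measurable]: "G \<in> borel_measurable borel" using borel_measurable_integrable[OF G] by simp
  have "emeasure (density lborel (\<lambda>x. ennreal (G x))) UNIV = (\<integral>\<^sup>+ x. ennreal (G x) \<partial>lborel)"
    by (subst emeasure_density) auto
  also have "\<dots> = ennreal (LINT x|lborel. G x)"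
    by (rule nn_integral_eq_integral[OF G]) (auto simp: nn)
  finally have e: "emeasure (density lborel (\<lambda>x. ennreal (G x))) UNIV = 1" using one by simp
  show "real_distribution (density lborel (\<lambda>x. ennreal (G x)))"
  proof (intro real_distribution.intro real_distribution_axioms.intro prob_spaceI)
    show "emeasure (density lborel (\<lambda>x. ennreal (G x))) (space (density lborel (\<lambda>x. ennreal (G x)))) = 1"
      using e by simp
  qed simp
  show "char (density lborel (\<lambda>x. ennreal (G x))) t = (CLBINT x. G x *\<^sub>R iexp (t * x))"
    unfolding char_def by (rule integral_density) (auto simp: nn)
qed

lemma real_unique:
  fixes f :: "real \<Rightarrow> real"
  assumes f: "integrable lborel f"
    and ft: "\<And>t. (CLBINT x. complex_of_real (f x) * iexp (t * x)) = 0"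
  shows "AE x in lborel. f x = 0"
proof -
  have fm[measurable]: "f \<in> borel_measurable borel" using borel_measurable_integrable[OF f] by simp
  define fp where "fp x = max (f x) 0" for x
  define fn where "fn x = max (- f x) 0" for x
  define g :: "real \<Rightarrow> real" where "g = indicator {0..1}"
  have [measurable]: "fp \<in> borel_measurable borel" "fn \<in> borel_measurable borel" "g \<in> borel_measurable borel"
    unfolding fp_def fn_def g_def by measurable
  have ifp: "integrable lborel fp" unfolding fp_def using f by auto
  have ifn: "integrable lborel fn" unfolding fn_def using f by auto
  have ig: "integrable lborel g" unfolding g_def by (rule integrable_real_indicator) auto
  have intg: "(LINT x|lborel. g x) = 1" unfolding g_def
    using has_bochner_integral_integral_eq[OF has_bochner_integral_real_indicator[of "{0..1::real}" lborel]]
    by simp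
  have f_eq: "f x = fp x - fn x" for x unfolding fp_def fn_def by auto
  have "complex_of_real (LINT x|lborel. f x) = 0" using ft[of 0] by simp
  then have "(LINT x|lborel. f x) = 0" by simp
  then have fpn: "(LINT x|lborel. fp x) = (LINT x|lborel. fn x)"
    unfolding f_eq using ifp ifn by simp
  define c where "c = (LINT x|lborel. fp x)"
  have c0: "0 \<le> c" unfolding c_def by (rule integral_nonneg_AE) (auto simp: fp_def)
  have cn: "(LINT x|lborel. fn x) = c" using fpn c_def by simp
  define G1 where "G1 x = (fp x + g x) / (c + 1)" for x
  define G2 where "G2 x = (fn x + g x) / (c + 1)" for x
  have iG1: "integrable lborel G1" unfolding G1_def using ifp ig by auto
  have iG2: "integrable lborel G2" unfolding G2_def using ifn ig by auto
  have nG1: "0 \<le> G1 x" for x unfolding G1_def fp_def g_def using c0 by auto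
  have nG2: "0 \<le> G2 x" for x unfolding G2_def fn_def g_def using c0 by auto
  have oG1: "(LINT x|lborel. G1 x) = 1" unfolding G1_def using ifp ig intg c0 c_def by simp
  have oG2: "(LINT x|lborel. G2 x) = 1" unfolding G2_def using ifn ig intg c0 cn by simp
  have ii: "integrable lborel (\<lambda>x. G x *\<^sub>R iexp (t * x))" if "integrable lborel G" for G t
  proof -
    have [measurable]: "G \<in> borel_measurable borel" using borel_measurable_integrable[OF that] by simp
    show ?thesis
    proof (rule Bochner_Integration.integrable_bound[OF that])
      show "(\<lambda>x. G x *\<^sub>R iexp (t * x)) \<in> borel_measurable lborel" by measurable
      show "AE x in lborel. norm (G x *\<^sub>R iexp (t * x)) \<le> norm (G x)" by (simp add: norm_mult)
    qed
  qed
  have "char (density lborel (\<lambda>x. ennreal (G1 x))) t = char (density lborel (\<lambda>x. ennreal (G2 x))) t" for t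
  proof -
    have "(CLBINT x. G1 x *\<^sub>R iexp (t * x)) - (CLBINT x. G2 x *\<^sub>R iexp (t * x))
        = (CLBINT x. G1 x *\<^sub>R iexp (t * x) - G2 x *\<^sub>R iexp (t * x))"
      by (rule Bochner_Integration.integral_diff[symmetric, OF ii[OF iG1] ii[OF iG2]])
    also have "\<dots> = (CLBINT x. (1 / (c + 1)) *\<^sub>R (complex_of_real (f x) * iexp (t * x)))"
    proof (rule Bochner_Integration.integral_cong[OF refl])
      fix x
      have "G1 x - G2 x = f x / (c + 1)" unfolding G1_def G2_def f_eq by (simp add: diff_divide_distrib[symmetric])
      then have d: "G1 x - G2 x = (1 / (c + 1)) * f x" by simp
      have "G1 x *\<^sub>R iexp (t * x) - G2 x *\<^sub>R iexp (t * x) = (G1 x - G2 x) *\<^sub>R iexp (t * x)"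
        by (rule scaleR_left_diff_distrib[symmetric])
      also have "\<dots> = ((1 / (c + 1)) * f x) *\<^sub>R iexp (t * x)" by (subst d) (rule refl)
      also have "\<dots> = (1 / (c + 1)) *\<^sub>R (complex_of_real (f x) * iexp (t * x))"
        by (simp add: scaleR_conv_of_real)
      finally show "G1 x *\<^sub>R iexp (t * x) - G2 x *\<^sub>R iexp (t * x) = (1 / (c + 1)) *\<^sub>R (complex_of_real (f x) * iexp (t * x))" .
    qed
    also have "\<dots> = 0" using ft[of t] by simp
    finally show ?thesis using dens_rd(2)[OF iG1 nG1 oG1] dens_rd(2)[OF iG2 nG2 oG2] by simp
  qed
  then have "density lborel (\<lambda>x. ennreal (G1 x)) = density lborel (\<lambda>x. ennreal (G2 x))"
    by (intro Levy_uniqueness dens_rd(1) iG1 nG1 oG1 iG2 nG2 oG2 ext)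
  then have "AE x in lborel. ennreal (G1 x) = ennreal (G2 x)"
    by (subst (asm) sigma_finite_measure.density_unique_iff[OF lborel.sigma_finite_measure_axioms]) (auto simp: G1_def G2_def)
  then show ?thesis
  proof eventually_elim
    case (elim x)
    then have "G1 x = G2 x" using nG1[of x] nG2[of x] by simp
    then have "fp x = fn x" unfolding G1_def G2_def using c0 by (simp add: divide_cancel_right)
    then show "f x = 0" using f_eq[of x] by simp
  qed
qed

lemma fourier_unique:
  fixes h :: "real \<Rightarrow> complex"
  assumes h: "integrable lborel h" and ht: "\<And>t. fourier_transform h t = 0"
  shows "AE x in lborel. h x = 0"
proof -
  have hm[measurable]: "h \<in> borel_measurable borel" using borel_measurable_integrable[OF h] by simp
  have ii: "integrable lborel (\<lambda>x. k x * iexp (t * x))" if "integrable lborel k" for k t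
  proof -
    have [measurable]: "k \<in> borel_measurable borel" using borel_measurable_integrable[OF that] by simp
    show ?thesis
    proof (rule Bochner_Integration.integrable_bound[OF that])
      show "(\<lambda>x. k x * iexp (t * x)) \<in> borel_measurable lborel" by measurable
      show "AE x in lborel. norm (k x * iexp (t * x)) \<le> norm (k x)" by (simp add: norm_mult)
    qed
  qed
  have e1: "(CLBINT x. h x * iexp (t * x)) = 0" for t
    using ht[of "-t"] unfolding fourier_transform_def by simp
  have e2: "(CLBINT x. cnj (h x) * iexp (t * x)) = 0" for t
  proof -
    have "(CLBINT x. cnj (h x) * iexp (t * x)) = (CLBINT x. cnj (h x * exp (- (\<i> * complex_of_real (t * x)))))"
      by (rule Bochner_Integration.integral_cong) (simp_all add: exp_cnj)
    also have "\<dots> = cnj (fourier_transform h t)" unfolding fourier_transform_def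
      by (rule Bochner_Integration.integral_cnj)
    finally show ?thesis using ht[of t] by simp
  qed
  have "AE x in lborel. Re (h x) = 0"
  proof (rule real_unique)
    show "integrable lborel (\<lambda>x. Re (h x))" using h by auto
    fix t
    have "(\<lambda>x. complex_of_real (Re (h x)) * iexp (t * x)) = (\<lambda>x. (h x * iexp (t * x) + cnj (h x) * iexp (t * x)) / 2)"
    proof
      fix x
      have r: "complex_of_real (Re (h x)) = (h x + cnj (h x)) / 2" by (simp add: complex_eq_iff)
      show "complex_of_real (Re (h x)) * iexp (t * x) = (h x * iexp (t * x) + cnj (h x) * iexp (t * x)) / 2"
        by (simp only: r times_divide_eq_left distrib_right)
    qed
    then show "(CLBINT x. complex_of_real (Re (h x)) * iexp (t * x)) = 0"
      using e1[of t] e2[of t] ii[OF h, of t] ii[OF integrable_cnj[OF h], of t] by simp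
  qed
  moreover have "AE x in lborel. Im (h x) = 0"
  proof (rule real_unique)
    show "integrable lborel (\<lambda>x. Im (h x))" using h by auto
    fix t
    have "(\<lambda>x. complex_of_real (Im (h x)) * iexp (t * x)) = (\<lambda>x. (h x * iexp (t * x) - cnj (h x) * iexp (t * x)) / (2 * \<i>))"
    proof
      fix x
      have r: "complex_of_real (Im (h x)) = (h x - cnj (h x)) / (2 * \<i>)" by (simp add: complex_eq_iff)
      show "complex_of_real (Im (h x)) * iexp (t * x) = (h x * iexp (t * x) - cnj (h x) * iexp (t * x)) / (2 * \<i>)"
        by (simp only: r times_divide_eq_left left_diff_distrib)
    qed
    then show "(CLBINT x. complex_of_real (Im (h x)) * iexp (t * x)) = 0"
      using e1[of t] e2[of t] ii[OF h, of t] ii[OF integrable_cnj[OF h], of t] by simp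
  qed
  ultimately show ?thesis by eventually_elim (simp add: complex_eq_iff)
qed


lemma shift_integrable:
  fixes k :: "real \<Rightarrow> 'a::{banach, second_countable_topology}"
  assumes "integrable lborel k"
  shows "integrable lborel (\<lambda>x. k (x - y))"
  using lborel_integrable_real_affine[OF assms, of 1 "-y"] by simp

lemma shift_integral:
  fixes k :: "real \<Rightarrow> 'a::{banach, second_countable_topology}"
  shows "(LINT x|lborel. k (x - y)) = (LINT x|lborel. k x)"
  using lborel_integral_real_affine[of 1 k "-y"] by simp

lemma conv_prod_integrable:
  fixes g :: "real \<Rightarrow> complex" and k :: "real \<Rightarrow> real" and \<phi> :: "real \<Rightarrow> complex"
  assumes g: "integrable lborel g" and k: "integrable lborel k"
    and \<phi>m: "\<phi> \<in> borel_measurable borel" and \<phi>b: "\<And>x. norm (\<phi> x) \<le> C"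
  shows "integrable (lborel \<Otimes>\<^sub>M lborel) (\<lambda>(y, x). g y * complex_of_real (k (x - y)) * \<phi> x)"
proof -
  have [measurable]: "g \<in> borel_measurable borel" using borel_measurable_integrable[OF g] by simp
  have [measurable]: "k \<in> borel_measurable borel" using borel_measurable_integrable[OF k] by simp
  have [measurable]: "\<phi> \<in> borel_measurable borel" by fact
  have C0: "0 \<le> C" using \<phi>b[of 0] norm_ge_zero order_trans by blast
  have ik: "integrable lborel (\<lambda>x. C * \<bar>k (x - y)\<bar>)" for y
    using shift_integrable[OF integrable_abs[OF k], of y] by auto
  have inner_int: "integrable lborel (\<lambda>x. g y * complex_of_real (k (x - y)) * \<phi> x)" for y
  proof (rule Bochner_Integration.integrable_bound[OF integrable_mult_right[OF ik[of y], of "norm (g y)"]])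
    show "(\<lambda>x. g y * complex_of_real (k (x - y)) * \<phi> x) \<in> borel_measurable lborel" by measurable
    show "AE x in lborel. norm (g y * complex_of_real (k (x - y)) * \<phi> x) \<le> norm (norm (g y) * (C * \<bar>k (x - y)\<bar>))"
      using \<phi>b C0 by (auto simp: norm_mult abs_mult intro!: mult_left_mono AE_I2 
            order_trans[OF mult_left_mono[OF \<phi>b]])
  qed
  show ?thesis
  proof (rule lborel_pair.Fubini_integrable)
    show "(\<lambda>(y, x). g y * complex_of_real (k (x - y)) * \<phi> x) \<in> borel_measurable (lborel \<Otimes>\<^sub>M lborel)"
      by measurable
    show "AE y in lborel. integrable lborel (\<lambda>x. case (y, x) of (y, x) \<Rightarrow> g y * complex_of_real (k (x - y)) * \<phi> x)"
      using inner_int by simp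
    have nb: "(LINT x|lborel. norm (g y * complex_of_real (k (x - y)) * \<phi> x)) \<le> norm (g y) * (C * (LINT x|lborel. \<bar>k x\<bar>))" for y
    proof -
      have "(LINT x|lborel. norm (g y * complex_of_real (k (x - y)) * \<phi> x)) \<le> (LINT x|lborel. norm (g y) * (C * \<bar>k (x - y)\<bar>))"
      proof (rule integral_mono)
        show "integrable lborel (\<lambda>x. norm (g y * complex_of_real (k (x - y)) * \<phi> x))"
          using inner_int[of y] by (rule integrable_norm)
        show "integrable lborel (\<lambda>x. norm (g y) * (C * \<bar>k (x - y)\<bar>))"
          using ik[of y] by (rule integrable_mult_right)
        fix x
        have "norm (\<phi> x) * \<bar>k (x - y)\<bar> \<le> C * \<bar>k (x - y)\<bar>" by (rule mult_right_mono[OF \<phi>b]) simp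
        then have "norm (g y) * (norm (\<phi> x) * \<bar>k (x - y)\<bar>) \<le> norm (g y) * (C * \<bar>k (x - y)\<bar>)"
          by (rule mult_left_mono) simp
        then show "norm (g y * complex_of_real (k (x - y)) * \<phi> x) \<le> norm (g y) * (C * \<bar>k (x - y)\<bar>)"
          by (simp add: norm_mult mult_ac)
      qed
      also have "\<dots> = norm (g y) * (C * (LINT x|lborel. \<bar>k (x - y)\<bar>))" by simp
      also have "(LINT x|lborel. \<bar>k (x - y)\<bar>) = (LINT x|lborel. \<bar>k x\<bar>)"
        by (rule shift_integral[of "\<lambda>x. \<bar>k x\<bar>"])
      finally show ?thesis .
    qed
    show "integrable lborel (\<lambda>y. LINT x|lborel. norm (case (y, x) of (y, x) \<Rightarrow> g y * complex_of_real (k (x - y)) * \<phi> x))"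
    proof (rule Bochner_Integration.integrable_bound[OF integrable_mult_left[OF integrable_norm[OF g], of "C * (LINT x|lborel. \<bar>k x\<bar>)"]])
      show "(\<lambda>y. LINT x|lborel. norm (case (y, x) of (y, x) \<Rightarrow> g y * complex_of_real (k (x - y)) * \<phi> x)) \<in> borel_measurable lborel"
      proof -
        have "(\<lambda>y. LINT x|lborel. norm (g y * complex_of_real (k (x - y)) * \<phi> x)) \<in> borel_measurable lborel"
          by (rule lborel.borel_measurable_lebesgue_integral) measurable
        then show ?thesis by simp
      qed
      show "AE y in lborel. norm (LINT x|lborel. norm (case (y, x) of (y, x) \<Rightarrow> g y * complex_of_real (k (x - y)) * \<phi> x))
         \<le> norm (norm (g y) * (C * (LINT x|lborel. \<bar>k x\<bar>)))"
      proof (rule AE_I2)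
        fix y
        have "0 \<le> (LINT x|lborel. norm (g y * complex_of_real (k (x - y)) * \<phi> x))" by simp
        then show "norm (LINT x|lborel. norm (case (y, x) of (y, x) \<Rightarrow> g y * complex_of_real (k (x - y)) * \<phi> x))
         \<le> norm (norm (g y) * (C * (LINT x|lborel. \<bar>k x\<bar>)))"
          using nb[of y] by simp
      qed
    qed
  qed
qed

lemma conv_fubini:
  fixes g :: "real \<Rightarrow> complex" and k :: "real \<Rightarrow> real" and \<phi> :: "real \<Rightarrow> complex"
  assumes g: "integrable lborel g" and k: "integrable lborel k"
    and \<phi>m: "\<phi> \<in> borel_measurable borel" and \<phi>b: "\<And>x. norm (\<phi> x) \<le> C"
  shows "(LINT x|lborel. (LINT y|lborel. g y * complex_of_real (k (x - y))) * \<phi> x)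
       = (LINT y|lborel. g y * (LINT x|lborel. complex_of_real (k (x - y)) * \<phi> x))"
proof -
  have I: "integrable (lborel \<Otimes>\<^sub>M lborel) (case_prod (\<lambda>y x. g y * complex_of_real (k (x - y)) * \<phi> x))"
    using conv_prod_integrable[OF assms] by simp
  have "(LINT x|lborel. (LINT y|lborel. g y * complex_of_real (k (x - y))) * \<phi> x)
      = (LINT x|lborel. (LINT y|lborel. g y * complex_of_real (k (x - y)) * \<phi> x))"
    by simp
  also have "\<dots> = (LINT y|lborel. (LINT x|lborel. g y * complex_of_real (k (x - y)) * \<phi> x))"
    by (rule lborel_pair.Fubini_integral[OF I])
  also have "\<dots> = (LINT y|lborel. g y * (LINT x|lborel. complex_of_real (k (x - y)) * \<phi> x))"
    by (simp add: mult.assoc)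
  finally show ?thesis .
qed

lemma conv_integrable:
  fixes g :: "real \<Rightarrow> complex" and k :: "real \<Rightarrow> real"
  assumes g: "integrable lborel g" and k: "integrable lborel k"
  shows "integrable lborel (\<lambda>x. LINT y|lborel. g y * complex_of_real (k (x - y)))"
proof -
  have I: "integrable (lborel \<Otimes>\<^sub>M lborel) (case_prod (\<lambda>y x. g y * complex_of_real (k (x - y)) * 1))"
    using conv_prod_integrable[OF g k, of "\<lambda>_. 1" 1] by simp
  show ?thesis using lborel_pair.integrable_snd[OF I] by simp
qed

definition ee :: "real \<Rightarrow> real \<Rightarrow> complex" where
  "ee t x = exp (- (\<i> * complex_of_real (t * x)))"

lemma ee_meas[measurable]: "ee t \<in> borel_measurable borel"
  unfolding ee_def by (intro borel_measurable_continuous_onI continuous_intros)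

lemma ee_norm: "norm (ee t x) = 1"
  unfolding ee_def by (simp only: norm_exp_eq_Re) simp

lemma ee_add: "ee t (z + y) = ee t z * ee t y"
  unfolding ee_def by (simp add: distrib_left exp_add[symmetric] algebra_simps)

lemma conv_fourier:
  fixes g :: "real \<Rightarrow> complex" and k :: "real \<Rightarrow> real"
  assumes g: "integrable lborel g" and k: "integrable lborel k"
  shows "fourier_transform (\<lambda>x. LINT y|lborel. g y * complex_of_real (k (x - y))) t
       = fourier_transform g t * fourier_transform (\<lambda>x. complex_of_real (k x)) t"
proof -
  have "fourier_transform (\<lambda>x. LINT y|lborel. g y * complex_of_real (k (x - y))) t
      = (LINT x|lborel. (LINT y|lborel. g y * complex_of_real (k (x - y))) * ee t x)"
    unfolding fourier_transform_def ee_def ..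
  also have "\<dots> = (LINT y|lborel. g y * (LINT x|lborel. complex_of_real (k (x - y)) * ee t x))"
    by (rule conv_fubini[OF g k ee_meas, where C=1]) (simp add: ee_norm)
  also have "\<dots> = (LINT y|lborel. g y * ee t y * fourier_transform (\<lambda>x. complex_of_real (k x)) t)"
  proof (rule Bochner_Integration.integral_cong[OF refl])
    fix y
    have "(LINT x|lborel. complex_of_real (k (x - y)) * ee t x)
        = (LINT x|lborel. (\<lambda>z. complex_of_real (k z) * ee t (z + y)) (x - y))"
      by simp
    also have "\<dots> = (LINT z|lborel. complex_of_real (k z) * ee t (z + y))"
      by (rule shift_integral)
    also have "\<dots> = (LINT z|lborel. complex_of_real (k z) * ee t z) * ee t y"
      by (simp add: ee_add mult.assoc[symmetric])
    finally show "g y * (LINT x|lborel. complex_of_real (k (x - y)) * ee t x)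
        = g y * ee t y * fourier_transform (\<lambda>x. complex_of_real (k x)) t"
      unfolding fourier_transform_def ee_def by simp
  qed
  also have "\<dots> = fourier_transform g t * fourier_transform (\<lambda>x. complex_of_real (k x)) t"
    unfolding fourier_transform_def ee_def by simp
  finally show ?thesis .
qed


lemma lim_x_minus: "LIM t at_top. (x::real) - t :> at_infinity"
proof -
  have "LIM t at_top. - x + t :> at_top"
    by (rule filterlim_tendsto_add_at_top[OF tendsto_const filterlim_ident])
  then have "LIM t at_top. x - t :> at_bot"
    by (subst filterlim_uminus_at_bot) simp
  then show ?thesis by (rule filterlim_mono[OF _ at_bot_le_at_infinity order_refl])
qed

lemma lim_x_plus: "LIM t at_top. (x::real) - (- t) :> at_infinity"
proof -
  have "LIM t at_top. x + t :> at_top"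
    by (rule filterlim_tendsto_add_at_top[OF tendsto_const filterlim_ident])
  then show ?thesis by (intro filterlim_mono[OF _ at_top_le_at_infinity order_refl]) simp
qed

lemma u_C0:
  fixes k :: "real \<Rightarrow> real" and \<phi> :: "real \<Rightarrow> complex"
  assumes kc: "\<And>x. isCont k x" and kb: "\<And>x. \<bar>k x\<bar> \<le> B" and k0: "(k \<longlongrightarrow> 0) at_infinity"
    and \<phi>: "integrable lborel \<phi>"
  shows "(\<lambda>y. LINT x|lborel. complex_of_real (k (x - y)) * \<phi> x) \<in> C0"
proof -
  define u where "u y = (LINT x|lborel. complex_of_real (k (x - y)) * \<phi> x)" for y
  have [measurable]: "k \<in> borel_measurable borel"
    by (intro borel_measurable_continuous_onI continuous_at_imp_continuous_on ballI kc)
  have [measurable]: "\<phi> \<in> borel_measurable borel" using borel_measurable_integrable[OF \<phi>] by simp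
  have w: "integrable lborel (\<lambda>x. B * norm (\<phi> x))" using \<phi> by auto
  have bnd: "norm (complex_of_real (k (x - y)) * \<phi> x) \<le> B * norm (\<phi> x)" for x y
    by (simp add: norm_mult mult_right_mono kb)
  have lim_gen: "((\<lambda>t. u (Y t)) \<longlongrightarrow> 0) at_top" if Y: "\<And>x. LIM t at_top. x - Y t :> at_infinity" for Y :: "real \<Rightarrow> real"
  proof -
    have L: "AE x in lborel. ((\<lambda>t. complex_of_real (k (x - Y t)) * \<phi> x) \<longlongrightarrow> 0) at_top"
    proof (rule AE_I2)
      fix x
      have "((\<lambda>t. k (x - Y t)) \<longlongrightarrow> 0) at_top" by (rule filterlim_compose[OF k0 Y])
      then have "((\<lambda>t. complex_of_real (k (x - Y t)) * \<phi> x) \<longlongrightarrow> complex_of_real 0 * \<phi> x) at_top"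
        by (intro tendsto_intros)
      then show "((\<lambda>t. complex_of_real (k (x - Y t)) * \<phi> x) \<longlongrightarrow> 0) at_top" by simp
    qed
    have "((\<lambda>t. LINT x|lborel. complex_of_real (k (x - Y t)) * \<phi> x) \<longlongrightarrow> 0) at_top"
      by (rule integral_dominated_convergence_at_top[where f="\<lambda>x. 0" and w="\<lambda>x. B * norm (\<phi> x)", simplified])
        (use L bnd w in auto)
    then show ?thesis unfolding u_def by simp
  qed
  have top: "(u \<longlongrightarrow> 0) at_top" using lim_gen[of "\<lambda>t. t"] lim_x_minus by simp
  have bot: "(u \<longlongrightarrow> 0) at_bot" unfolding filterlim_at_bot_mirror
    using lim_gen[of "\<lambda>t. - t"] lim_x_plus by simp
  have inf: "(u \<longlongrightarrow> 0) at_infinity"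
    unfolding at_infinity_eq_at_top_bot by (rule filterlim_sup[OF top bot])
  have cont: "isCont u y0" for y0
    unfolding isCont_def tendsto_at_iff_sequentially
  proof (intro allI impI)
    fix X :: "nat \<Rightarrow> real" assume X: "X \<longlonglongrightarrow> y0"
    have "(\<lambda>n. LINT x|lborel. complex_of_real (k (x - X n)) * \<phi> x) \<longlonglongrightarrow> (LINT x|lborel. complex_of_real (k (x - y0)) * \<phi> x)"
    proof -
      have L: "AE x in lborel. (\<lambda>n. complex_of_real (k (x - X n)) * \<phi> x) \<longlonglongrightarrow> complex_of_real (k (x - y0)) * \<phi> x"
      proof (rule AE_I2)
        fix x
        have "(\<lambda>n. x - X n) \<longlonglongrightarrow> x - y0" by (intro tendsto_intros X)
        then have "(\<lambda>n. k (x - X n)) \<longlonglongrightarrow> k (x - y0)" by (rule isCont_tendsto_compose[OF kc])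
        then show "(\<lambda>n. complex_of_real (k (x - X n)) * \<phi> x) \<longlonglongrightarrow> complex_of_real (k (x - y0)) * \<phi> x"
          by (intro tendsto_intros)
      qed
      show ?thesis
        by (rule integral_dominated_convergence[where w="\<lambda>x. B * norm (\<phi> x)"]) (use L bnd w in auto)
    qed
    then show "(u \<circ> X) \<longlonglongrightarrow> u y0" unfolding u_def comp_def .
  qed
  show ?thesis unfolding C0_def u_def[symmetric]
    using inf cont by (auto intro: continuous_at_imp_continuous_on)
qed


lemma sinc_bound: "\<bar>sinc z\<bar> \<le> 1"
proof (cases "z = 0")
  case False
  then show ?thesis using abs_sin_x_le_abs_x[of z] by (simp add: abs_divide divide_le_eq_1)
qed simp

lemma P_bound: "\<bar>P b x\<bar> \<le> b\<^sup>2 / 2"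
proof -
  have sq: "\<bar>a\<bar> \<le> 1 \<Longrightarrow> a\<^sup>2 \<le> 1" for a :: real by (simp add: abs_square_le_1)
  have "(sinc (b * x / 2))\<^sup>2 \<le> 1" by (rule sq[OF sinc_bound])
  then have "b\<^sup>2 * (sinc (b * x / 2))\<^sup>2 \<le> b\<^sup>2" by (simp add: mult_left_le)
  then show ?thesis unfolding P_def by simp
qed

lemma P_lim: "(P b \<longlongrightarrow> 0) at_infinity"
proof (rule Lim_null_comparison)
  show "\<forall>\<^sub>F x in at_infinity. norm (P b x) \<le> 2 * (inverse (norm x))\<^sup>2"
    unfolding eventually_at_infinity
  proof (intro exI[of _ 1] allI impI)
    fix x :: real assume x: "1 \<le> norm x"
    then have "x \<noteq> 0" by auto
    have e: "P b x = (1 - cos (b * x)) / x\<^sup>2" by (rule P_alt) fact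
    have "norm (P b x) = P b x" using P_nonneg[of b x] by simp
    also have "\<dots> \<le> 2 / x\<^sup>2" unfolding e
      by (rule divide_right_mono) (use cos_ge_minus_one[of "b*x"] in auto)
    also have "2 / x\<^sup>2 = 2 * (inverse (norm x))\<^sup>2" by (simp add: power_inverse divide_inverse)
    finally show "norm (P b x) \<le> 2 * (inverse (norm x))\<^sup>2" .
  qed
  show "((\<lambda>x::real. 2 * (inverse (norm x))\<^sup>2) \<longlongrightarrow> 0) at_infinity"
    using tendsto_mult[OF tendsto_const[of 2] tendsto_power[OF tendsto_inverse_0_at_top[OF filterlim_norm_at_top[where 'a=real]], of 2]]
    by simp
qed

lemma K_alt: "K s = (\<lambda>x. (P (2 * s) x - P s x) * (1 / (pi * s)))"
  unfolding K_def by (rule ext) simp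

lemma K_cont: "isCont (K s) x"
  unfolding K_alt by (intro continuous_intros P_cont)

lemma K_bound: "\<bar>K s x\<bar> \<le> (\<bar>(2 * s)\<^sup>2 / 2\<bar> + \<bar>s\<^sup>2 / 2\<bar>) / \<bar>pi * s\<bar>"
proof -
  have "\<bar>P (2 * s) x - P s x\<bar> \<le> \<bar>(2 * s)\<^sup>2 / 2\<bar> + \<bar>s\<^sup>2 / 2\<bar>"
    using P_bound[of "2 * s" x] P_bound[of s x] by linarith
  then show ?thesis unfolding K_def abs_divide by (rule divide_right_mono) simp
qed

lemma K_lim: "(K s \<longlongrightarrow> 0) at_infinity"
proof -
  have "((\<lambda>x. (P (2 * s) x - P s x) * (1 / (pi * s))) \<longlongrightarrow> (0 - 0) * (1 / (pi * s))) at_infinity"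
    by (intro tendsto_intros P_lim)
  then show ?thesis unfolding K_alt by simp
qed

theorem lemma4p2:
  fixes \<sigma> :: real and \<psi> :: "real \<Rightarrow> complex"
  assumes "0 < \<sigma>"
    and "integrable lborel \<psi>"
    and "\<exists>C. AE x in lborel. norm (\<psi> x) \<le> C"
  shows "continuous_map (weak_star_B1 \<sigma>) euclidean
           (\<lambda>g. LINT t|lborel. g t * cnj (\<psi> t))"
proof -
  from assms(3) obtain C where C: "AE x in lborel. norm (\<psi> x) \<le> C" by blast
  define C' where "C' = max C 0"
  have \<psi>m[measurable]: "\<psi> \<in> borel_measurable borel" using borel_measurable_integrable[OF assms(2)] by simp
  define \<phi> where "\<phi> x = (if norm (\<psi> x) \<le> C then cnj (\<psi> x) else 0)" for x
  have cm: "(\<lambda>x. cnj (\<psi> x)) \<in> borel_measurable borel"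
  proof -
    have "(\<lambda>z. cnj z) \<in> borel_measurable (borel :: complex measure)"
      by (intro borel_measurable_continuous_onI continuous_intros)
    from measurable_compose[OF \<psi>m this] show ?thesis .
  qed
  have \<phi>m[measurable]: "\<phi> \<in> borel_measurable borel" unfolding \<phi>_def
  proof (rule measurable_If[OF cm])
    show "{x \<in> space borel. norm (\<psi> x) \<le> C} \<in> sets borel" by measurable
  qed simp
  have \<phi>b: "norm (\<phi> x) \<le> C'" for x unfolding \<phi>_def C'_def by auto
  have \<phi>ae: "AE x in lborel. \<phi> x = cnj (\<psi> x)" using C by eventually_elim (simp add: \<phi>_def)
  have \<phi>i: "integrable lborel \<phi>"
    using integrable_cnj[OF assms(2)] cm by (subst integrable_cong_AE[OF _ _ \<phi>ae]) auto
  define u where "u y = (LINT x|lborel. complex_of_real (K \<sigma> (x - y)) * \<phi> x)" for y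
  have uC0: "u \<in> C0" unfolding u_def by (rule u_C0[OF K_cont K_bound K_lim \<phi>i])
  have key: "(LINT t|lborel. g t * cnj (\<psi> t)) = pairing g u" if g: "g \<in> B1 \<sigma>" for g
  proof -
    have gi: "integrable lborel g" and gs: "closure {t. fourier_transform g t \<noteq> 0} \<subseteq> {-\<sigma>..\<sigma>}"
      using g by (auto simp: B1_def)
    have gm[measurable]: "g \<in> borel_measurable borel" using borel_measurable_integrable[OF gi] by simp
    define cv where "cv x = (LINT y|lborel. g y * complex_of_real (K \<sigma> (x - y)))" for x
    have cvi: "integrable lborel cv" unfolding cv_def by (rule conv_integrable[OF gi K_int])
    have cvm[measurable]: "cv \<in> borel_measurable borel" using borel_measurable_integrable[OF cvi] by simp
    have FT: "fourier_transform (\<lambda>x. cv x - g x) t = 0" for t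
    proof -
      have ii: "integrable lborel (\<lambda>x. f x * ee t x)" if "integrable lborel f" for f :: "real \<Rightarrow> complex"
      proof -
        have [measurable]: "f \<in> borel_measurable borel" using borel_measurable_integrable[OF that] by simp
        show ?thesis
        proof (rule Bochner_Integration.integrable_bound[OF that])
          show "(\<lambda>x. f x * ee t x) \<in> borel_measurable lborel" by measurable
          show "AE x in lborel. norm (f x * ee t x) \<le> norm (f x)" by (simp add: norm_mult ee_norm)
        qed
      qed
      have e0: "fourier_transform (\<lambda>x. cv x - g x) t = (LINT x|lborel. cv x * ee t x - g x * ee t x)"
        unfolding fourier_transform_def ee_def by (rule Bochner_Integration.integral_cong[OF refl]) (simp only: left_diff_distrib)
      have e1: "(LINT x|lborel. cv x * ee t x - g x * ee t x) = fourier_transform cv t - fourier_transform g t"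
        unfolding fourier_transform_def ee_def[symmetric]
        by (rule Bochner_Integration.integral_diff[OF ii[OF cvi] ii[OF gi]])
      have e2: "fourier_transform cv t = fourier_transform g t * fourier_transform (\<lambda>x. complex_of_real (K \<sigma> x)) t"
        unfolding cv_def by (rule conv_fourier[OF gi K_int])
      have e3: "fourier_transform g t * fourier_transform (\<lambda>x. complex_of_real (K \<sigma> x)) t - fourier_transform g t = 0"
      proof (cases "\<bar>t\<bar> \<le> \<sigma>")
        case True
        show ?thesis unfolding K_fourier[OF assms(1) True] by simp
      next
        case False
        then have n1: "t \<notin> {-\<sigma>..\<sigma>}" unfolding abs_le_iff by auto
        have n2: "t \<notin> closure {t. fourier_transform g t \<noteq> 0}"
          using n1 gs by (meson subsetD)
        have "t \<notin> {t. fourier_transform g t \<noteq> 0}"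
          using n2 closure_subset by (meson subsetD)
        then show ?thesis by simp
      qed
      show ?thesis by (subst e0, subst e1, subst e2, rule e3)
    qed
    have "AE x in lborel. cv x - g x = 0" by (rule fourier_unique[OF _ FT]) (use cvi gi in auto)
    then have cvg: "AE x in lborel. g x = cv x" by eventually_elim simp
    have "(LINT t|lborel. g t * cnj (\<psi> t)) = (LINT t|lborel. cv t * \<phi> t)"
    proof (rule integral_cong_AE)
      show "AE x in lborel. g x * cnj (\<psi> x) = cv x * \<phi> x" using cvg \<phi>ae by eventually_elim simp
      show "(\<lambda>x. g x * cnj (\<psi> x)) \<in> borel_measurable lborel"
        using cm by (intro borel_measurable_times) simp_all
      show "(\<lambda>x. cv x * \<phi> x) \<in> borel_measurable lborel" by measurable
    qed
    also have "\<dots> = (LINT y|lborel. g y * u y)" unfolding cv_def u_def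
      by (rule conv_fubini[OF gi K_int \<phi>m \<phi>b])
    also have "\<dots> = pairing g u" unfolding pairing_def ..
    finally show ?thesis .
  qed
  have ts: "topspace (weak_star_B1 \<sigma>) = B1 \<sigma>" unfolding weak_star_B1_def by auto
  show ?thesis
    unfolding continuous_map
  proof (intro conjI allI impI)
    show "(\<lambda>g. LINT t|lborel. g t * cnj (\<psi> t)) ` topspace (weak_star_B1 \<sigma>) \<subseteq> topspace euclidean" by simp
    fix U :: "complex set" assume "openin euclidean U"
    then have oU: "open U" by simp
    have "{x \<in> topspace (weak_star_B1 \<sigma>). (LINT t|lborel. x t * cnj (\<psi> t)) \<in> U} = {f \<in> B1 \<sigma>. pairing f u \<in> U}"
      using key ts by auto
    moreover have "openin (weak_star_B1 \<sigma>) {f \<in> B1 \<sigma>. pairing f u \<in> U}"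
      unfolding weak_star_B1_def openin_topology_generated_by_iff
      by (rule generate_topology_on.Basis) (use uC0 oU in blast)
    ultimately show "openin (weak_star_B1 \<sigma>) {x \<in> topspace (weak_star_B1 \<sigma>). (LINT t|lborel. x t * cnj (\<psi> t)) \<in> U}"
      by simp
  qed
qed

end
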